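(* Let $G$ and $H$ be countable discrete groups equipped with proper left-invariant metrics. If $G$ and $H$ have finite APC-decomposition complexity, then the wreath product $H\wr G$ (with a proper left-invariant metric) has finite APC-decomposition complexity.
   Context: $H\wr G=H^{(G)}\rtimes G$, where $H^{(G)}$ is the group of finitely supported functions $G\to H$ and $G$ acts by translation. Every countable group carries a proper left-invariant metric, unique up to coarse equivalence. A family $\mathcal{U}$ of metric subspaces of $(X,d)$ is $r$-disjoint if $d(x,y)>r$ whenever $x\in U$, $y\in U'$, $U\neq U'$ in $\mathcal{U}$. For families $\mathcal{X},\mathcal{Y}$ and $R\in\mathbb{R}^{\mathbb{N}}$, $\mathcal{X}\xrightarrow{R}\mathcal{Y}$ means: there is an integer $k$ such that for each $X\in\mathcal{X}$ there are subcollections $\mathcal{U}_1,\dots,\mathcal{U}_k\subseteq\mathcal{Y}$ of subspaces of $X$, each $\mathcal{U}_i$ being $R_i$-disjoint, with $\bigcup_i\mathcal{U}_i$ covering $X$. A family is bounded if the diameters of its members are uniformly bounded. $\mathfrak{C}_0$ is the class of bounded families; for an ordinal $\alpha>0$, $\mathfrak{C}_\alpha$ is the class of families $\mathcal{X}$ such that for every $R\in\mathbb{R}^{\mathbb{N}}$ there exist $\beta<\alpha$ and $\mathcal{Y}\in\mathfrak{C}_\beta$ with $\mathcal{X}\xrightarrow{R}\mathcal{Y}$. A metric space has finite APC-decomposition complexity if it is a member of some family belonging to $\mathfrak{C}_\alpha$ for some ordinal $\alpha$. *)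

theory Defs
  imports "HOL-Algebra.Algebra"
begin

definition proper_left_invariant_metric ::
  "('g, 'a) monoid_scheme \<Rightarrow> ('g \<Rightarrow> 'g \<Rightarrow> real) \<Rightarrow> bool" where
  "proper_left_invariant_metric G d \<longleftrightarrow>
     (\<forall>x\<in>carrier G. \<forall>y\<in>carrier G.
        (d x y = 0 \<longleftrightarrow> x = y) \<and> d x y = d y x \<and>
        (\<forall>z\<in>carrier G. d x z \<le> d x y + d y z)) \<and>
     (\<forall>g\<in>carrier G. \<forall>x\<in>carrier G. \<forall>y\<in>carrier G.
        d (g \<otimes>\<^bsub>G\<^esub> x) (g \<otimes>\<^bsub>G\<^esub> y) = d x y) \<and>
     (\<forall>x\<in>carrier G. \<forall>r::real. finite {y \<in> carrier G. d x y \<le> r})"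

text \<open>\<open>H \<wr> G = H^(G) \<rtimes> G\<close>: pairs (f, g) with f a finitely supported function
  from G to H (extensional outside carrier G) and g in G; G acts by left translation,
  \<open>(g \<cdot> f)(x) = f(g\<inverse> x)\<close>, and \<open>(f,g)(f',g') = (f \<cdot> (g \<cdot> f'), g g')\<close>.\<close>
definition wreath_product ::
  "('h, 'b) monoid_scheme \<Rightarrow> ('g, 'a) monoid_scheme \<Rightarrow> (('g \<Rightarrow> 'h) \<times> 'g) monoid" where
  "wreath_product H G =
    \<lparr> carrier = {(f, g). f \<in> extensional (carrier G) \<and> f \<in> carrier G \<rightarrow> carrier H \<and>
                        finite {x \<in> carrier G. f x \<noteq> \<one>\<^bsub>H\<^esub>} \<and> g \<in> carrier G},
      monoid.mult = (\<lambda>(f, g) (f', g').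
                ((\<lambda>x. if x \<in> carrier G then f x \<otimes>\<^bsub>H\<^esub> f' (inv\<^bsub>G\<^esub> g \<otimes>\<^bsub>G\<^esub> x) else undefined),
                 g \<otimes>\<^bsub>G\<^esub> g')),
      monoid.one = ((\<lambda>x. if x \<in> carrier G then \<one>\<^bsub>H\<^esub> else undefined), \<one>\<^bsub>G\<^esub>) \<rparr>"

text \<open>Families are sets of subspaces of one ambient (pseudo)metric \<open>d\<close>; subspaces carry
  the restricted metric.\<close>

definition r_disjoint :: "('a \<Rightarrow> 'a \<Rightarrow> real) \<Rightarrow> real \<Rightarrow> 'a set set \<Rightarrow> bool" where
  "r_disjoint d r UU \<longleftrightarrow>
     (\<forall>U\<in>UU. \<forall>U'\<in>UU. U \<noteq> U' \<longrightarrow> (\<forall>x\<in>U. \<forall>y\<in>U'. d x y > r))"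

definition bounded_family :: "('a \<Rightarrow> 'a \<Rightarrow> real) \<Rightarrow> 'a set set \<Rightarrow> bool" where
  "bounded_family d XX \<longleftrightarrow> (\<exists>B::real. \<forall>A\<in>XX. \<forall>x\<in>A. \<forall>y\<in>A. d x y \<le> B)"

text \<open>\<open>XX \<rightarrow>R YY\<close>: the sequence \<open>R \<in> \<real>^\<nat>\<close> is indexed so that \<open>U_i\<close> is \<open>R_i\<close>-disjoint
  for \<open>i = 1..k\<close>.\<close>
definition decomposes :: "('a \<Rightarrow> 'a \<Rightarrow> real) \<Rightarrow> 'a set set \<Rightarrow> (nat \<Rightarrow> real) \<Rightarrow> 'a set set \<Rightarrow> bool" where
  "decomposes d XX R YY \<longleftrightarrow>
     (\<exists>k::nat. \<forall>A\<in>XX. \<exists>UU::nat \<Rightarrow> 'a set set.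
        (\<forall>i\<in>{1..k}. UU i \<subseteq> YY \<and> (\<forall>V\<in>UU i. V \<subseteq> A) \<and> r_disjoint d (R i) (UU i)) \<and>
        \<Union>(\<Union>i\<in>{1..k}. UU i) = A)"

text \<open>The union over all ordinals \<open>\<alpha>\<close> of the classes \<open>\<frak>C_\<alpha>\<close>, defined as the least class
  containing the bounded families and closed under the transfinite step.\<close>
inductive APC_class :: "('a \<Rightarrow> 'a \<Rightarrow> real) \<Rightarrow> 'a set set \<Rightarrow> bool" for d where
  bounded: "bounded_family d XX \<Longrightarrow> APC_class d XX"
| step: "(\<And>R. \<exists>YY. APC_class d YY \<and> decomposes d XX R YY) \<Longrightarrow> APC_class d XX"

definition finite_APC_complexity :: "('a \<Rightarrow> 'a \<Rightarrow> real) \<Rightarrow> 'a set \<Rightarrow> bool" where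
  "finite_APC_complexity d S \<longleftrightarrow> (\<exists>XX. S \<in> XX \<and> APC_class d XX)"

end

theory Submission
  imports Defs
begin

definition decomp_k where
  "decomp_k d XX R YY k \<longleftrightarrow> (\<forall>A\<in>XX. \<exists>UU::nat \<Rightarrow> 'a set set.
        (\<forall>i\<in>{1..k}. UU i \<subseteq> YY \<and> (\<forall>V\<in>UU i. V \<subseteq> A) \<and> r_disjoint d (R i) (UU i)) \<and>
        \<Union>(\<Union>i\<in>{1..k}. UU i) = A)"

lemma decomposes_k: "decomposes d XX R YY \<longleftrightarrow> (\<exists>k. decomp_k d XX R YY k)"
  unfolding decomposes_def decomp_k_def by simp

lemma decomp_k_sub: "decomp_k d XX R YY k \<Longrightarrow> XX' \<subseteq> XX \<Longrightarrow> decomp_k d XX' R YY k"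
  unfolding decomp_k_def by (meson subsetD)

lemma APC_mono:
  assumes "APC_class d XX" "XX' \<subseteq> XX" shows "APC_class d XX'"
  using assms
proof (induction arbitrary: XX' rule: APC_class.induct)
  case (bounded XX)
  then obtain B where "\<forall>A\<in>XX. \<forall>x\<in>A. \<forall>y\<in>A. d x y \<le> B" unfolding bounded_family_def by blast
  with bounded.prems have "\<forall>A\<in>XX'. \<forall>x\<in>A. \<forall>y\<in>A. d x y \<le> B" by (meson subsetD)
  then have "bounded_family d XX'" unfolding bounded_family_def by blast
  then show ?case by (rule APC_class.bounded)
next
  case (step XX)
  show ?case
  proof (rule APC_class.step)
    fix R
    from step(1)[of R] obtain YY k where Y: "APC_class d YY" "decomp_k d XX R YY k"
      unfolding decomposes_k by blast
    from decomp_k_sub[OF Y(2) step.prems] Y(1)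
    show "\<exists>YY. APC_class d YY \<and> decomposes d XX' R YY" unfolding decomposes_k by blast
  qed
qed
lemma APC_dec:
  assumes "APC_class d XX" shows "\<exists>YY. APC_class d YY \<and> decomposes d XX R YY"
  using assms
proof (cases rule: APC_class.cases)
  case bounded
  have "decomp_k d XX R XX 1"
    unfolding decomp_k_def
  proof (intro ballI)
    fix A assume "A \<in> XX"
    show "\<exists>UU. (\<forall>i\<in>{1..1::nat}. UU i \<subseteq> XX \<and> (\<forall>V\<in>UU i. V \<subseteq> A) \<and> r_disjoint d (R i) (UU i)) \<and>
             \<Union> (\<Union>i\<in>{1..1}. UU i) = A"
      by (rule exI[of _ "\<lambda>_. {A}"]) (use \<open>A \<in> XX\<close> in \<open>auto simp: r_disjoint_def\<close>)
  qed
  then show ?thesis using assms unfolding decomposes_k by blast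
next
  case step
  then show ?thesis by blast
qed

lemma decomp_k_mono:
  assumes "decomp_k d XX R YY k" "k \<le> k'" "YY \<subseteq> YY'"
  shows "decomp_k d XX R YY' k'"
  unfolding decomp_k_def
proof
  fix A assume A: "A \<in> XX"
  from bspec[OF assms(1)[unfolded decomp_k_def] A] obtain UU where U: "\<forall>i\<in>{1..k}. UU i \<subseteq> YY \<and> (\<forall>V\<in>UU i. V \<subseteq> A) \<and> r_disjoint d (R i) (UU i)"
    "\<Union>(\<Union>i\<in>{1..k}. UU i) = A" by (elim exE conjE) (rule that)
  define UU' where "UU' i = (if i \<le> k then UU i else {})" for i
  have "\<forall>i\<in>{1..k'}. UU' i \<subseteq> YY' \<and> (\<forall>V\<in>UU' i. V \<subseteq> A) \<and> r_disjoint d (R i) (UU' i)"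
  proof
    fix i assume i: "i \<in> {1..k'}"
    show "UU' i \<subseteq> YY' \<and> (\<forall>V\<in>UU' i. V \<subseteq> A) \<and> r_disjoint d (R i) (UU' i)"
    proof (cases "i \<le> k")
      case True
      then have "i \<in> {1..k}" using i by simp
      then have "UU i \<subseteq> YY \<and> (\<forall>V\<in>UU i. V \<subseteq> A) \<and> r_disjoint d (R i) (UU i)" using U(1) by blast
      then show ?thesis using assms(3) True unfolding UU'_def by auto
    next
      case False
      then show ?thesis unfolding UU'_def r_disjoint_def by simp
    qed
  qed
  moreover have "(\<Union>i\<in>{1..k'}. UU' i) = (\<Union>i\<in>{1..k}. UU i)"
  proof
    show "(\<Union>i\<in>{1..k'}. UU' i) \<subseteq> (\<Union>i\<in>{1..k}. UU i)"
      by (auto simp: UU'_def split: if_splits)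
    show "(\<Union>i\<in>{1..k}. UU i) \<subseteq> (\<Union>i\<in>{1..k'}. UU' i)"
    proof
      fix Vs assume "Vs \<in> (\<Union>i\<in>{1..k}. UU i)"
      then obtain i where "i \<in> {1..k}" "Vs \<in> UU i" by blast
      then have "i \<in> {1..k'}" "Vs \<in> UU' i" using assms(2) by (auto simp: UU'_def)
      then show "Vs \<in> (\<Union>i\<in>{1..k'}. UU' i)" by blast
    qed
  qed
  then have "\<Union>(\<Union>i\<in>{1..k'}. UU' i) = A" using U(2) by simp
  ultimately show "\<exists>UU. (\<forall>i\<in>{1..k'}. UU i \<subseteq> YY' \<and> (\<forall>V\<in>UU i. V \<subseteq> A) \<and> r_disjoint d (R i) (UU i)) \<and>
        \<Union>(\<Union>i\<in>{1..k'}. UU i) = A" by blast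
qed

lemma decomp_k_Un:
  assumes "decomp_k d XX R YY k" "decomp_k d XX' R YY k"
  shows "decomp_k d (XX \<union> XX') R YY k"
  using assms unfolding decomp_k_def ball_Un by simp

lemma bounded_Un:
  assumes "bounded_family d XX" "bounded_family d YY"
  shows "bounded_family d (XX \<union> YY)"
proof -
  from assms obtain B1 B2 where "\<forall>A\<in>XX. \<forall>x\<in>A. \<forall>y\<in>A. d x y \<le> B1" "\<forall>A\<in>YY. \<forall>x\<in>A. \<forall>y\<in>A. d x y \<le> B2"
    unfolding bounded_family_def by blast
  then have "\<forall>A\<in>XX \<union> YY. \<forall>x\<in>A. \<forall>y\<in>A. d x y \<le> max B1 B2"
    by (metis Un_iff max.coboundedI1 max.coboundedI2)
  then show ?thesis unfolding bounded_family_def by blast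
qed

lemma APC_famUn:
  assumes "APC_class d XX" "APC_class d YY" shows "APC_class d (XX \<union> YY)"
  using assms
proof (induction arbitrary: YY rule: APC_class.induct)
  case (bounded XX)
  show ?case using bounded.prems
  proof (induction rule: APC_class.induct)
    case (bounded YY)
    then show ?case using bounded_Un \<open>bounded_family d XX\<close> APC_class.bounded by blast
  next
    case (step YY)
    show ?case
    proof (rule APC_class.step)
      fix R
      from step[of R] obtain YY' where Y: "APC_class d (XX \<union> YY')" "decomposes d YY R YY'" by blast
      from APC_dec[OF APC_class.bounded[OF \<open>bounded_family d XX\<close>], of R]
      obtain XX' where X: "APC_class d XX'" "decomposes d XX R XX'" by blast
      have k1: "decomp_k d XX R XX 1"
        unfolding decomp_k_def
      proof (intro ballI)
        fix A assume "A \<in> XX"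
        show "\<exists>UU. (\<forall>i\<in>{1..1::nat}. UU i \<subseteq> XX \<and> (\<forall>V\<in>UU i. V \<subseteq> A) \<and> r_disjoint d (R i) (UU i)) \<and>
                 \<Union> (\<Union>i\<in>{1..1}. UU i) = A"
          by (rule exI[of _ "\<lambda>_. {A}"]) (use \<open>A \<in> XX\<close> in \<open>auto simp: r_disjoint_def\<close>)
      qed
      from Y(2) obtain k2 where k2: "decomp_k d YY R YY' k2" by (auto simp: decomposes_k)
      have "decomp_k d (XX \<union> YY) R (XX \<union> YY') (max 1 k2)"
        by (rule decomp_k_Un[OF decomp_k_mono[OF k1] decomp_k_mono[OF k2]]) auto
      then show "\<exists>YYa. APC_class d YYa \<and> decomposes d (XX \<union> YY) R YYa"
        using Y(1) by (auto simp: decomposes_k)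
    qed
  qed
next
  case (step XX)
  show ?case
  proof (rule APC_class.step)
    fix R
    from APC_dec[OF step.prems, of R] obtain YY' where Y: "APC_class d YY'" "decomposes d YY R YY'" by blast
    from step(1)[of R] Y(1) obtain XX' where X: "APC_class d (XX' \<union> YY')" "decomposes d XX R XX'" by blast
    from X(2) obtain k1 where k1: "decomp_k d XX R XX' k1" by (auto simp: decomposes_k)
    from Y(2) obtain k2 where k2: "decomp_k d YY R YY' k2" by (auto simp: decomposes_k)
    have "decomp_k d (XX \<union> YY) R (XX' \<union> YY') (max k1 k2)"
      by (rule decomp_k_Un[OF decomp_k_mono[OF k1] decomp_k_mono[OF k2]]) auto
    then show "\<exists>YYa. APC_class d YYa \<and> decomposes d (XX \<union> YY) R YYa"
      using X(1) by (auto simp: decomposes_k)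
  qed
qed


lemma APC_transl:
  assumes inv: "\<forall>g\<in>carrier W. \<forall>x\<in>carrier W. \<forall>y\<in>carrier W. d (g \<otimes>\<^bsub>W\<^esub> x) (g \<otimes>\<^bsub>W\<^esub> y) = d x y"
    and "APC_class d XX"
  shows "APC_class d {B. \<exists>A\<in>XX. A \<subseteq> carrier W \<and> (\<exists>g\<in>carrier W. B \<subseteq> (\<lambda>x. g \<otimes>\<^bsub>W\<^esub> x) ` A)}"
  using assms(2)
proof (induction rule: APC_class.induct)
  case (bounded XX)
  then obtain B where B: "\<forall>A\<in>XX. \<forall>x\<in>A. \<forall>y\<in>A. d x y \<le> B" unfolding bounded_family_def by blast
  have "\<forall>A\<in>{B. \<exists>A\<in>XX. A \<subseteq> carrier W \<and> (\<exists>g\<in>carrier W. B \<subseteq> (\<lambda>x. g \<otimes>\<^bsub>W\<^esub> x) ` A)}.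
          \<forall>x\<in>A. \<forall>y\<in>A. d x y \<le> B"
  proof (intro ballI)
    fix A' x y assume A': "A' \<in> {B. \<exists>A\<in>XX. A \<subseteq> carrier W \<and> (\<exists>g\<in>carrier W. B \<subseteq> (\<lambda>x. g \<otimes>\<^bsub>W\<^esub> x) ` A)}"
      and xy: "x \<in> A'" "y \<in> A'"
    then obtain A g where Ag: "A \<in> XX" "A \<subseteq> carrier W" "g \<in> carrier W" "A' \<subseteq> (\<lambda>x. g \<otimes>\<^bsub>W\<^esub> x) ` A" by blast
    with xy obtain a b where "a \<in> A" "b \<in> A" "x = g \<otimes>\<^bsub>W\<^esub> a" "y = g \<otimes>\<^bsub>W\<^esub> b" by blast
    moreover have "a \<in> carrier W" "b \<in> carrier W" using \<open>a \<in> A\<close> \<open>b \<in> A\<close> Ag(2) by auto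
    ultimately have "d x y = d a b" using inv Ag(3) by simp
    also have "\<dots> \<le> B" using B Ag(1) \<open>a \<in> A\<close> \<open>b \<in> A\<close> by blast
    finally show "d x y \<le> B" .
  qed
  then show ?case unfolding bounded_family_def by (intro APC_class.bounded) (unfold bounded_family_def, blast)
next
  case (step XX)
  let ?T = "\<lambda>XX. {B. \<exists>A\<in>XX. A \<subseteq> carrier W \<and> (\<exists>g\<in>carrier W. B \<subseteq> (\<lambda>x. g \<otimes>\<^bsub>W\<^esub> x) ` A)}"
  show ?case
  proof (rule APC_class.step)
    fix R
    from step(1)[of R] obtain YY where Y: "APC_class d (?T YY)" "decomposes d XX R YY" by blast
    from Y(2) obtain k where k: "decomp_k d XX R YY k" by (auto simp: decomposes_k)
    have "decomp_k d (?T XX) R (?T YY) k"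
      unfolding decomp_k_def
    proof
      fix B' assume "B' \<in> ?T XX"
      then obtain A g where Ag: "A \<in> XX" "A \<subseteq> carrier W" "g \<in> carrier W" "B' \<subseteq> (\<lambda>x. g \<otimes>\<^bsub>W\<^esub> x) ` A" by blast
      from bspec[OF k[unfolded decomp_k_def] Ag(1)] obtain UU where U: "\<forall>i\<in>{1..k}. UU i \<subseteq> YY \<and> (\<forall>V\<in>UU i. V \<subseteq> A) \<and> r_disjoint d (R i) (UU i)"
        "\<Union>(\<Union>i\<in>{1..k}. UU i) = A" by (elim exE conjE) (rule that)
      define UU' where "UU' i = (\<lambda>V. B' \<inter> (\<lambda>x. g \<otimes>\<^bsub>W\<^esub> x) ` V) ` UU i" for i
      have "\<forall>i\<in>{1..k}. UU' i \<subseteq> ?T YY \<and> (\<forall>V\<in>UU' i. V \<subseteq> B') \<and> r_disjoint d (R i) (UU' i)"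
      proof
        fix i assume i: "i \<in> {1..k}"
        have "UU' i \<subseteq> ?T YY"
        proof
          fix U assume "U \<in> UU' i"
          then obtain V where V: "V \<in> UU i" "U = B' \<inter> (\<lambda>x. g \<otimes>\<^bsub>W\<^esub> x) ` V" unfolding UU'_def by blast
          have "V \<in> YY" "V \<subseteq> carrier W" using U(1) i V Ag(2) by blast+
          then show "U \<in> ?T YY" using V Ag(3) by blast
        qed
        moreover have "r_disjoint d (R i) (UU' i)"
          unfolding r_disjoint_def
        proof (intro ballI impI)
          fix U U' x y assume UU: "U \<in> UU' i" "U' \<in> UU' i" "U \<noteq> U'" "x \<in> U" "y \<in> U'"
          then obtain V V' where V: "V \<in> UU i" "U = B' \<inter> (\<lambda>x. g \<otimes>\<^bsub>W\<^esub> x) ` V"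
            "V' \<in> UU i" "U' = B' \<inter> (\<lambda>x. g \<otimes>\<^bsub>W\<^esub> x) ` V'" unfolding UU'_def by blast
          then have "V \<noteq> V'" using UU(3) by blast
          from V UU obtain a b where ab: "a \<in> V" "b \<in> V'" "x = g \<otimes>\<^bsub>W\<^esub> a" "y = g \<otimes>\<^bsub>W\<^esub> b" by blast
          have "a \<in> carrier W" "b \<in> carrier W" using ab U(1) i V Ag(2) by blast+
          then have "d x y = d a b" using inv Ag(3) ab by auto
          moreover have "d a b > R i" using U(1) i V \<open>V \<noteq> V'\<close> ab unfolding r_disjoint_def by blast
          ultimately show "d x y > R i" by simp
        qed
        moreover have "\<forall>V\<in>UU' i. V \<subseteq> B'" unfolding UU'_def by (auto simp: image_iff)
        ultimately show "UU' i \<subseteq> ?T YY \<and> (\<forall>V\<in>UU' i. V \<subseteq> B') \<and> r_disjoint d (R i) (UU' i)"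
          by (intro conjI)
      qed
      moreover have "\<Union>(\<Union>i\<in>{1..k}. UU' i) = B'"
      proof
        show "\<Union>(\<Union>i\<in>{1..k}. UU' i) \<subseteq> B'" unfolding UU'_def by blast
        show "B' \<subseteq> \<Union>(\<Union>i\<in>{1..k}. UU' i)"
        proof
          fix x assume "x \<in> B'"
          then obtain a where a: "a \<in> A" "x = g \<otimes>\<^bsub>W\<^esub> a" using Ag(4) by blast
          then obtain i V where "i \<in> {1..k}" "V \<in> UU i" "a \<in> V" using U(2) by blast
          then show "x \<in> \<Union>(\<Union>i\<in>{1..k}. UU' i)" unfolding UU'_def using a \<open>x \<in> B'\<close> by blast
        qed
      qed
      ultimately show "\<exists>UU. (\<forall>i\<in>{1..k}. UU i \<subseteq> ?T YY \<and> (\<forall>V\<in>UU i. V \<subseteq> B') \<and> r_disjoint d (R i) (UU i)) \<and>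
        \<Union>(\<Union>i\<in>{1..k}. UU i) = B'" by blast
    qed
    then show "\<exists>YY. APC_class d YY \<and> decomposes d (?T XX) R YY" using Y(1) by (auto simp: decomposes_k)
  qed
qed

lemma APC_Un2:
  assumes "APC_class d XX" "APC_class d YY"
  shows "APC_class d {A \<union> B |A B. A \<in> XX \<and> B \<in> YY}"
proof (rule APC_class.step)
  fix R
  from APC_dec[OF assms(1), of R] obtain XX' k1 where X: "APC_class d XX'" "decomp_k d XX R XX' k1"
    by (auto simp: decomposes_k)
  from APC_dec[OF assms(2), of "\<lambda>i. R (i + k1)"] obtain YY' k2 where
    Y: "APC_class d YY'" "decomp_k d YY (\<lambda>i. R (i + k1)) YY' k2"
    by (auto simp: decomposes_k)
  have "decomp_k d {A \<union> B |A B. A \<in> XX \<and> B \<in> YY} R (XX' \<union> YY') (k1 + k2)"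
    unfolding decomp_k_def
  proof
    fix C assume "C \<in> {A \<union> B |A B. A \<in> XX \<and> B \<in> YY}"
    then obtain A B where AB: "A \<in> XX" "B \<in> YY" "C = A \<union> B" by blast
    from bspec[OF X(2)[unfolded decomp_k_def] AB(1)] obtain UA where UA: "\<forall>i\<in>{1..k1}. UA i \<subseteq> XX' \<and> (\<forall>V\<in>UA i. V \<subseteq> A) \<and> r_disjoint d (R i) (UA i)"
        "\<Union>(\<Union>i\<in>{1..k1}. UA i) = A" by (elim exE conjE) (rule that)
    from bspec[OF Y(2)[unfolded decomp_k_def] AB(2)] obtain UB where UB: "\<forall>i\<in>{1..k2}. UB i \<subseteq> YY' \<and> (\<forall>V\<in>UB i. V \<subseteq> B) \<and> r_disjoint d (R (i + k1)) (UB i)"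
        "\<Union>(\<Union>i\<in>{1..k2}. UB i) = B" by (elim exE conjE) (rule that)
    define UU where "UU i = (if i \<le> k1 then UA i else UB (i - k1))" for i
    have "\<forall>i\<in>{1..k1+k2}. UU i \<subseteq> XX' \<union> YY' \<and> (\<forall>V\<in>UU i. V \<subseteq> C) \<and> r_disjoint d (R i) (UU i)"
    proof
      fix i assume i: "i \<in> {1..k1+k2}"
      show "UU i \<subseteq> XX' \<union> YY' \<and> (\<forall>V\<in>UU i. V \<subseteq> C) \<and> r_disjoint d (R i) (UU i)"
      proof (cases "i \<le> k1")
        case True
        then have "i \<in> {1..k1}" using i by auto
        then have "UA i \<subseteq> XX' \<and> (\<forall>V\<in>UA i. V \<subseteq> A) \<and> r_disjoint d (R i) (UA i)" using UA(1) by blast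
        then show ?thesis using True AB(3) unfolding UU_def by auto
      next
        case False
        then have "i - k1 \<in> {1..k2}" "i - k1 + k1 = i" using i by auto
        then have "UB (i-k1) \<subseteq> YY' \<and> (\<forall>V\<in>UB (i-k1). V \<subseteq> B) \<and> r_disjoint d (R (i - k1 + k1)) (UB (i-k1))" using UB(1) by blast
        then show ?thesis using False AB(3) \<open>i - k1 + k1 = i\<close> unfolding UU_def by auto
      qed
    qed
    moreover have "\<Union>(\<Union>i\<in>{1..k1+k2}. UU i) = C"
    proof
      show "\<Union>(\<Union>i\<in>{1..k1+k2}. UU i) \<subseteq> C"
      proof
        fix x assume "x \<in> \<Union>(\<Union>i\<in>{1..k1+k2}. UU i)"
        then obtain i V where iV: "i \<in> {1..k1+k2}" "V \<in> UU i" "x \<in> V" by blast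
        show "x \<in> C"
        proof (cases "i \<le> k1")
          case True
          then have "i \<in> {1..k1}" "V \<in> UA i" using iV unfolding UU_def by auto
          then have "x \<in> A" using iV(3) UA(2) by blast
          then show ?thesis using AB(3) by blast
        next
          case False
          then have "i - k1 \<in> {1..k2}" "V \<in> UB (i - k1)" using iV unfolding UU_def by auto
          then have "x \<in> B" using iV(3) UB(2) by blast
          then show ?thesis using AB(3) by blast
        qed
      qed
      show "C \<subseteq> \<Union>(\<Union>i\<in>{1..k1+k2}. UU i)"
      proof
        fix x assume "x \<in> C"
        then have "x \<in> A \<or> x \<in> B" using AB(3) by blast
        then show "x \<in> \<Union>(\<Union>i\<in>{1..k1+k2}. UU i)"
        proof
          assume "x \<in> A"
          then obtain i V where "i \<in> {1..k1}" "V \<in> UA i" "x \<in> V" using UA(2) by blast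
          then show ?thesis unfolding UU_def by (intro UnionI[of V] UN_I[of i]) auto
        next
          assume "x \<in> B"
          then obtain i V where iV: "i \<in> {1..k2}" "V \<in> UB i" "x \<in> V" using UB(2) by blast
          then have "V \<in> UU (i + k1)" "i + k1 \<in> {1..k1+k2}" unfolding UU_def by auto
          then show ?thesis using iV(3) by blast
        qed
      qed
    qed
    ultimately show "\<exists>UU. (\<forall>i\<in>{1..k1+k2}. UU i \<subseteq> XX' \<union> YY' \<and> (\<forall>V\<in>UU i. V \<subseteq> C) \<and> r_disjoint d (R i) (UU i)) \<and>
        \<Union>(\<Union>i\<in>{1..k1+k2}. UU i) = C" by blast
  qed
  then show "\<exists>ZZ. APC_class d ZZ \<and> decomposes d {A \<union> B |A B. A \<in> XX \<and> B \<in> YY} R ZZ"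
    using APC_famUn[OF X(1) Y(1)] by (auto simp: decomposes_k)
qed

lemma APC_Union_fin:
  assumes "finite F" "\<forall>h\<in>F. APC_class d {S h}"
  shows "APC_class d {\<Union>h\<in>F. S h}"
  using assms
proof (induction F rule: finite_induct)
  case empty
  show ?case by (rule APC_class.bounded) (auto simp: bounded_family_def)
next
  case (insert x F)
  have "APC_class d {A \<union> B |A B. A \<in> {S x} \<and> B \<in> {\<Union>h\<in>F. S h}}"
    using insert by (intro APC_Un2) auto
  then show ?case by (rule APC_mono) auto
qed

lemma APC_fiber:
  assumes "APC_class e YY"
    and H1: "\<And>r. \<exists>s. \<forall>x\<in>Sx. \<forall>y\<in>Sx. d x y \<le> r \<longrightarrow> e (p x) (p y) \<le> s"
    and H2: "\<And>ZZ. bounded_family e ZZ \<Longrightarrow> APC_class d ((\<lambda>Y. p -` Y \<inter> Sx) ` ZZ)"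
  shows "APC_class d ((\<lambda>Y. p -` Y \<inter> Sx) ` YY)"
  using assms(1)
proof (induction rule: APC_class.induct)
  case (bounded YY)
  then show ?case by (rule H2)
next
  case (step YY)
  let ?P = "\<lambda>Y. p -` Y \<inter> Sx"
  show ?case
  proof (rule APC_class.step)
    fix R
    define R' :: "nat \<Rightarrow> real" where "R' i = (SOME s. \<forall>x\<in>Sx. \<forall>y\<in>Sx. d x y \<le> R i \<longrightarrow> e (p x) (p y) \<le> s)" for i
    have R': "\<forall>x\<in>Sx. \<forall>y\<in>Sx. d x y \<le> R i \<longrightarrow> e (p x) (p y) \<le> R' i" for i
      unfolding R'_def by (rule someI_ex) (rule H1)
    from step(1)[of R'] obtain ZZ where Z: "APC_class d (?P ` ZZ)" "decomposes e YY R' ZZ"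
      by (elim exE conjE) (rule that)
    from Z(2) obtain k where k: "decomp_k e YY R' ZZ k" by (auto simp: decomposes_k)
    have "decomp_k d (?P ` YY) R (?P ` ZZ) k"
      unfolding decomp_k_def
    proof
      fix A assume "A \<in> ?P ` YY"
      then obtain Y where Y: "Y \<in> YY" "A = ?P Y" by (elim imageE) (rule that, assumption, assumption)
      from bspec[OF k[unfolded decomp_k_def] Y(1)] obtain UU where U: "\<forall>i\<in>{1..k}. UU i \<subseteq> ZZ \<and> (\<forall>V\<in>UU i. V \<subseteq> Y) \<and> r_disjoint e (R' i) (UU i)"
        "\<Union>(\<Union>i\<in>{1..k}. UU i) = Y" by (elim exE conjE) (rule that)
      have "\<forall>i\<in>{1..k}. ?P ` UU i \<subseteq> ?P ` ZZ \<and> (\<forall>V\<in>?P ` UU i. V \<subseteq> A) \<and> r_disjoint d (R i) (?P ` UU i)"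
      proof
        fix i assume i: "i \<in> {1..k}"
        have "r_disjoint d (R i) (?P ` UU i)"
          unfolding r_disjoint_def
        proof (intro ballI impI)
          fix U U' x y assume UU: "U \<in> ?P ` UU i" "U' \<in> ?P ` UU i" "U \<noteq> U'" "x \<in> U" "y \<in> U'"
          then obtain V V' where V: "V \<in> UU i" "V' \<in> UU i" "U = ?P V" "U' = ?P V'" by blast
          then have "V \<noteq> V'" using UU(3) by blast
          have rd: "r_disjoint e (R' i) (UU i)" using U(1) i by blast
          have "p x \<in> V" "p y \<in> V'" using UU(4,5) V by auto
          then have "e (p x) (p y) > R' i" using rd V(1,2) \<open>V \<noteq> V'\<close> unfolding r_disjoint_def by blast
          moreover have "x \<in> Sx" "y \<in> Sx" using UU(4,5) V by auto
          ultimately show "d x y > R i" using R'[of i] by (meson not_le)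
        qed
        moreover have u1: "UU i \<subseteq> ZZ \<and> (\<forall>V\<in>UU i. V \<subseteq> Y)" using U(1) i by blast
        moreover have "?P ` UU i \<subseteq> ?P ` ZZ" using u1 by (intro image_mono) simp
        moreover have "\<forall>V\<in>?P ` UU i. V \<subseteq> A" using u1 Y(2) by auto
        ultimately show "?P ` UU i \<subseteq> ?P ` ZZ \<and> (\<forall>V\<in>?P ` UU i. V \<subseteq> A) \<and> r_disjoint d (R i) (?P ` UU i)"
          by (intro conjI)
      qed
      moreover have "\<Union>(\<Union>i\<in>{1..k}. ?P ` UU i) = ?P (\<Union>(\<Union>i\<in>{1..k}. UU i))"
        by auto
      then have "\<Union>(\<Union>i\<in>{1..k}. ?P ` UU i) = A"
        using U(2) Y(2) by simp
      ultimately have f: "(\<forall>i\<in>{1..k}. ?P ` UU i \<subseteq> ?P ` ZZ \<and> (\<forall>V\<in>?P ` UU i. V \<subseteq> A) \<and> r_disjoint d (R i) (?P ` UU i)) \<and>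
        \<Union>(\<Union>i\<in>{1..k}. ?P ` UU i) = A" by (rule conjI)
      show "\<exists>UU. (\<forall>i\<in>{1..k}. UU i \<subseteq> ?P ` ZZ \<and> (\<forall>V\<in>UU i. V \<subseteq> A) \<and> r_disjoint d (R i) (UU i)) \<and>
        \<Union>(\<Union>i\<in>{1..k}. UU i) = A" by (rule exI[where x="\<lambda>i. ?P ` UU i"]) (rule f)
    qed
    then have "decomposes d (?P ` YY) R (?P ` ZZ)" unfolding decomposes_k by (rule exI)
    with Z(1) show "\<exists>YY'. APC_class d YY' \<and> decomposes d (?P ` YY) R YY'" by (intro exI[where x="?P ` ZZ"] conjI)
  qed
qed


locale wr = G: group G + H: group H for G :: "('g, 'c) monoid_scheme" and H :: "('h, 'd) monoid_scheme"
begin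

abbreviation W where "W \<equiv> wreath_product H G"

definition supp :: "('g \<Rightarrow> 'h) \<Rightarrow> 'g set" where
  "supp f = {x \<in> carrier G. f x \<noteq> \<one>\<^bsub>H\<^esub>}"

lemma carrier_W: "(f, g) \<in> carrier W \<longleftrightarrow>
    f \<in> extensional (carrier G) \<and> f \<in> carrier G \<rightarrow> carrier H \<and> finite (supp f) \<and> g \<in> carrier G"
  by (simp add: wreath_product_def supp_def)

lemma mult_W: "(f, g) \<otimes>\<^bsub>W\<^esub> (f', g') =
   ((\<lambda>x. if x \<in> carrier G then f x \<otimes>\<^bsub>H\<^esub> f' (inv\<^bsub>G\<^esub> g \<otimes>\<^bsub>G\<^esub> x) else undefined), g \<otimes>\<^bsub>G\<^esub> g')"
  by (simp add: wreath_product_def)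

lemma one_W: "\<one>\<^bsub>W\<^esub> = ((\<lambda>x. if x \<in> carrier G then \<one>\<^bsub>H\<^esub> else undefined), \<one>\<^bsub>G\<^esub>)"
  by (simp add: wreath_product_def)

lemma mult_closed_W:
  assumes "(f, g) \<in> carrier W" "(f', g') \<in> carrier W"
  shows "(f, g) \<otimes>\<^bsub>W\<^esub> (f', g') \<in> carrier W"
proof -
  let ?h = "\<lambda>x. if x \<in> carrier G then f x \<otimes>\<^bsub>H\<^esub> f' (inv\<^bsub>G\<^esub> g \<otimes>\<^bsub>G\<^esub> x) else undefined"
  have A: "f \<in> carrier G \<rightarrow> carrier H" "f' \<in> carrier G \<rightarrow> carrier H" "finite (supp f)" "finite (supp f')"
    "g \<in> carrier G" "g' \<in> carrier G" using assms by (auto simp: carrier_W)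
  have fx: "\<And>x. x \<in> carrier G \<Longrightarrow> f x \<in> carrier H" "\<And>x. x \<in> carrier G \<Longrightarrow> f' x \<in> carrier H"
    using A(1,2) by (simp_all add: funcset_mem)
  have "?h \<in> carrier G \<rightarrow> carrier H" using A fx by auto
  moreover have "supp ?h \<subseteq> supp f \<union> (\<lambda>y. g \<otimes>\<^bsub>G\<^esub> y) ` supp f'"
  proof
    fix x assume x: "x \<in> supp ?h"
    then have xG: "x \<in> carrier G" by (simp add: supp_def)
    show "x \<in> supp f \<union> (\<lambda>y. g \<otimes>\<^bsub>G\<^esub> y) ` supp f'"
    proof (cases "f x = \<one>\<^bsub>H\<^esub>")
      case True
      have yG: "inv\<^bsub>G\<^esub> g \<otimes>\<^bsub>G\<^esub> x \<in> carrier G" using xG A by simp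
      have "f' (inv\<^bsub>G\<^esub> g \<otimes>\<^bsub>G\<^esub> x) \<noteq> \<one>\<^bsub>H\<^esub>" using x xG True yG A by (auto simp: supp_def)
      then have "inv\<^bsub>G\<^esub> g \<otimes>\<^bsub>G\<^esub> x \<in> supp f'" using yG by (simp add: supp_def)
      moreover have "x = g \<otimes>\<^bsub>G\<^esub> (inv\<^bsub>G\<^esub> g \<otimes>\<^bsub>G\<^esub> x)" using xG A
        by (simp add: G.m_assoc[symmetric])
      ultimately show ?thesis by blast
    next
      case False then show ?thesis using xG by (simp add: supp_def)
    qed
  qed
  then have "finite (supp ?h)" using A by (meson finite_UnI finite_imageI finite_subset)
  ultimately show ?thesis using A by (simp add: mult_W carrier_W extensional_def)
qed

lemma one_closed_W: "\<one>\<^bsub>W\<^esub> \<in> carrier W"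
  by (simp add: one_W carrier_W supp_def extensional_def)

lemma assoc_W:
  assumes "x \<in> carrier W" "y \<in> carrier W" "z \<in> carrier W"
  shows "x \<otimes>\<^bsub>W\<^esub> y \<otimes>\<^bsub>W\<^esub> z = x \<otimes>\<^bsub>W\<^esub> (y \<otimes>\<^bsub>W\<^esub> z)"
proof -
  obtain f g f' g' f'' g'' where xyz: "x = (f, g)" "y = (f', g')" "z = (f'', g'')"
    by (metis prod.exhaust)
  have A: "f \<in> carrier G \<rightarrow> carrier H" "f' \<in> carrier G \<rightarrow> carrier H" "f'' \<in> carrier G \<rightarrow> carrier H"
    "g \<in> carrier G" "g' \<in> carrier G" "g'' \<in> carrier G" using assms xyz by (auto simp: carrier_W)
  have "(\<lambda>xa. if xa \<in> carrier G
            then (if xa \<in> carrier G then f xa \<otimes>\<^bsub>H\<^esub> f' (inv\<^bsub>G\<^esub> g \<otimes>\<^bsub>G\<^esub> xa) else undefined) \<otimes>\<^bsub>H\<^esub>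
                 f'' (inv\<^bsub>G\<^esub> (g \<otimes>\<^bsub>G\<^esub> g') \<otimes>\<^bsub>G\<^esub> xa) else undefined) =
        (\<lambda>xa. if xa \<in> carrier G
            then f xa \<otimes>\<^bsub>H\<^esub> (if inv\<^bsub>G\<^esub> g \<otimes>\<^bsub>G\<^esub> xa \<in> carrier G
                 then f' (inv\<^bsub>G\<^esub> g \<otimes>\<^bsub>G\<^esub> xa) \<otimes>\<^bsub>H\<^esub> f'' (inv\<^bsub>G\<^esub> g' \<otimes>\<^bsub>G\<^esub> (inv\<^bsub>G\<^esub> g \<otimes>\<^bsub>G\<^esub> xa))
                 else undefined) else undefined)"
  proof
    fix a
    show "(if a \<in> carrier G
            then (if a \<in> carrier G then f a \<otimes>\<^bsub>H\<^esub> f' (inv\<^bsub>G\<^esub> g \<otimes>\<^bsub>G\<^esub> a) else undefined) \<otimes>\<^bsub>H\<^esub>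
                 f'' (inv\<^bsub>G\<^esub> (g \<otimes>\<^bsub>G\<^esub> g') \<otimes>\<^bsub>G\<^esub> a) else undefined) =
        (if a \<in> carrier G
            then f a \<otimes>\<^bsub>H\<^esub> (if inv\<^bsub>G\<^esub> g \<otimes>\<^bsub>G\<^esub> a \<in> carrier G
                 then f' (inv\<^bsub>G\<^esub> g \<otimes>\<^bsub>G\<^esub> a) \<otimes>\<^bsub>H\<^esub> f'' (inv\<^bsub>G\<^esub> g' \<otimes>\<^bsub>G\<^esub> (inv\<^bsub>G\<^esub> g \<otimes>\<^bsub>G\<^esub> a))
                 else undefined) else undefined)"
    proof (cases "a \<in> carrier G")
      case True
      have e: "inv\<^bsub>G\<^esub> (g \<otimes>\<^bsub>G\<^esub> g') \<otimes>\<^bsub>G\<^esub> a = inv\<^bsub>G\<^esub> g' \<otimes>\<^bsub>G\<^esub> (inv\<^bsub>G\<^esub> g \<otimes>\<^bsub>G\<^esub> a)"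
        using A True by (simp add: G.inv_mult_group G.m_assoc)
      have "f a \<in> carrier H" "f' (inv\<^bsub>G\<^esub> g \<otimes>\<^bsub>G\<^esub> a) \<in> carrier H"
        "f'' (inv\<^bsub>G\<^esub> g' \<otimes>\<^bsub>G\<^esub> (inv\<^bsub>G\<^esub> g \<otimes>\<^bsub>G\<^esub> a)) \<in> carrier H"
        using A True by (auto intro!: funcset_mem[OF A(1)] funcset_mem[OF A(2)] funcset_mem[OF A(3)])
      then show ?thesis using True A e by (simp add: H.m_assoc)
    next
      case False then show ?thesis by simp
    qed
  qed
  then show ?thesis using A xyz by (simp add: mult_W G.m_assoc)
qed

definition invW :: "('g \<Rightarrow> 'h) \<times> 'g \<Rightarrow> ('g \<Rightarrow> 'h) \<times> 'g" where
  "invW w = ((\<lambda>x. if x \<in> carrier G then inv\<^bsub>H\<^esub> (fst w (snd w \<otimes>\<^bsub>G\<^esub> x)) else undefined), inv\<^bsub>G\<^esub> snd w)"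

lemma invW_closed:
  assumes "w \<in> carrier W" shows "invW w \<in> carrier W"
proof -
  obtain f g where w: "w = (f, g)" by (metis prod.exhaust)
  have A: "f \<in> carrier G \<rightarrow> carrier H" "finite (supp f)" "g \<in> carrier G"
    using assms w by (auto simp: carrier_W)
  let ?h = "\<lambda>x. if x \<in> carrier G then inv\<^bsub>H\<^esub> (f (g \<otimes>\<^bsub>G\<^esub> x)) else undefined"
  have fx: "\<And>x. x \<in> carrier G \<Longrightarrow> f x \<in> carrier H"
    using A(1) by (simp_all add: funcset_mem)
  have "?h \<in> carrier G \<rightarrow> carrier H" using A fx by auto
  moreover have "supp ?h \<subseteq> (\<lambda>y. inv\<^bsub>G\<^esub> g \<otimes>\<^bsub>G\<^esub> y) ` supp f"
  proof
    fix x assume x: "x \<in> supp ?h"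
    then have xG: "x \<in> carrier G" by (simp add: supp_def)
    have gx: "g \<otimes>\<^bsub>G\<^esub> x \<in> carrier G" using xG A by simp
    then have fH: "f (g \<otimes>\<^bsub>G\<^esub> x) \<in> carrier H" using A by auto
    have "f (g \<otimes>\<^bsub>G\<^esub> x) \<noteq> \<one>\<^bsub>H\<^esub>" using x xG by (auto simp: supp_def)
    then have "g \<otimes>\<^bsub>G\<^esub> x \<in> supp f" using gx by (simp add: supp_def)
    moreover have "x = inv\<^bsub>G\<^esub> g \<otimes>\<^bsub>G\<^esub> (g \<otimes>\<^bsub>G\<^esub> x)" using xG A by (simp add: G.m_assoc[symmetric])
    ultimately show "x \<in> (\<lambda>y. inv\<^bsub>G\<^esub> g \<otimes>\<^bsub>G\<^esub> y) ` supp f" by blast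
  qed
  then have "finite (supp ?h)" using A by (meson finite_imageI finite_subset)
  ultimately show ?thesis unfolding w invW_def fst_conv snd_conv using A by (simp add: carrier_W extensional_def)
qed

lemma invW_l:
  assumes "w \<in> carrier W" shows "invW w \<otimes>\<^bsub>W\<^esub> w = \<one>\<^bsub>W\<^esub>"
proof -
  obtain f g where w: "w = (f, g)" by (metis prod.exhaust)
  have A: "f \<in> carrier G \<rightarrow> carrier H" "g \<in> carrier G"
    using assms w by (auto simp: carrier_W)
  have eq: "(\<lambda>x. if x \<in> carrier G then (if x \<in> carrier G then inv\<^bsub>H\<^esub> (f (g \<otimes>\<^bsub>G\<^esub> x)) else undefined)
          \<otimes>\<^bsub>H\<^esub> f (inv\<^bsub>G\<^esub> (inv\<^bsub>G\<^esub> g) \<otimes>\<^bsub>G\<^esub> x) else undefined)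
      = (\<lambda>x. if x \<in> carrier G then \<one>\<^bsub>H\<^esub> else undefined)"
  proof
    fix x show "(if x \<in> carrier G then (if x \<in> carrier G then inv\<^bsub>H\<^esub> (f (g \<otimes>\<^bsub>G\<^esub> x)) else undefined)
          \<otimes>\<^bsub>H\<^esub> f (inv\<^bsub>G\<^esub> (inv\<^bsub>G\<^esub> g) \<otimes>\<^bsub>G\<^esub> x) else undefined)
      = (if x \<in> carrier G then \<one>\<^bsub>H\<^esub> else undefined)"
    proof (cases "x \<in> carrier G")
      case True
      then have "f (g \<otimes>\<^bsub>G\<^esub> x) \<in> carrier H" using A by auto
      then show ?thesis using True A by simp
    qed simp
  qed
  show ?thesis unfolding w invW_def fst_conv snd_conv mult_W one_W using eq A by simp
qed

lemma l_one_W: assumes "w \<in> carrier W" shows "\<one>\<^bsub>W\<^esub> \<otimes>\<^bsub>W\<^esub> w = w"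
proof -
  obtain f g where w: "w = (f, g)" by (metis prod.exhaust)
  have A: "f \<in> extensional (carrier G)" "f \<in> carrier G \<rightarrow> carrier H" "g \<in> carrier G"
    using assms w by (auto simp: carrier_W)
  have "(\<lambda>x. if x \<in> carrier G then (if x \<in> carrier G then \<one>\<^bsub>H\<^esub> else undefined) \<otimes>\<^bsub>H\<^esub> f (inv\<^bsub>G\<^esub> \<one>\<^bsub>G\<^esub> \<otimes>\<^bsub>G\<^esub> x) else undefined) = f"
  proof
    fix x show "(if x \<in> carrier G then (if x \<in> carrier G then \<one>\<^bsub>H\<^esub> else undefined) \<otimes>\<^bsub>H\<^esub> f (inv\<^bsub>G\<^esub> \<one>\<^bsub>G\<^esub> \<otimes>\<^bsub>G\<^esub> x) else undefined) = f x"
      using A by (cases "x \<in> carrier G") (auto simp: extensional_def funcset_mem)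
  qed
  then show ?thesis using w A by (simp add: mult_W one_W)
qed

lemma group_W: "group W"
proof (rule groupI)
  show "\<And>x y. x \<in> carrier W \<Longrightarrow> y \<in> carrier W \<Longrightarrow> x \<otimes>\<^bsub>W\<^esub> y \<in> carrier W"
    by (metis mult_closed_W prod.exhaust)
  show "\<one>\<^bsub>W\<^esub> \<in> carrier W" by (rule one_closed_W)
  show "\<And>x y z. x \<in> carrier W \<Longrightarrow> y \<in> carrier W \<Longrightarrow> z \<in> carrier W \<Longrightarrow>
     x \<otimes>\<^bsub>W\<^esub> y \<otimes>\<^bsub>W\<^esub> z = x \<otimes>\<^bsub>W\<^esub> (y \<otimes>\<^bsub>W\<^esub> z)" by (rule assoc_W)
  show "\<And>x. x \<in> carrier W \<Longrightarrow> \<one>\<^bsub>W\<^esub> \<otimes>\<^bsub>W\<^esub> x = x" by (rule l_one_W)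
  show "\<And>x. x \<in> carrier W \<Longrightarrow> \<exists>y\<in>carrier W. y \<otimes>\<^bsub>W\<^esub> x = \<one>\<^bsub>W\<^esub>"
    using invW_closed invW_l by blast
qed

lemma inv_W: "w \<in> carrier W \<Longrightarrow> inv\<^bsub>W\<^esub> w = invW w"
  by (rule group.inv_equality[OF group_W invW_l _ invW_closed])

end


lemma plim_inv_left:
  assumes "group A" "proper_left_invariant_metric A d" "a \<in> carrier A" "b \<in> carrier A"
  shows "d a b = d \<one>\<^bsub>A\<^esub> (inv\<^bsub>A\<^esub> a \<otimes>\<^bsub>A\<^esub> b)"
proof -
  interpret A: group A by (rule assms(1))
  have inv: "\<forall>g\<in>carrier A. \<forall>x\<in>carrier A. \<forall>y\<in>carrier A. d (g \<otimes>\<^bsub>A\<^esub> x) (g \<otimes>\<^bsub>A\<^esub> y) = d x y"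
    using assms(2) unfolding proper_left_invariant_metric_def by blast
  have "d (inv\<^bsub>A\<^esub> a \<otimes>\<^bsub>A\<^esub> a) (inv\<^bsub>A\<^esub> a \<otimes>\<^bsub>A\<^esub> b) = d a b"
    using bspec[OF bspec[OF bspec[OF inv A.inv_closed[OF assms(3)]] assms(3)] assms(4)] .
  then show ?thesis using assms(3) by simp
qed

lemma plim_finite_ball:
  assumes "group A" "proper_left_invariant_metric A d"
  shows "finite {c \<in> carrier A. d \<one>\<^bsub>A\<^esub> c \<le> r}"
proof -
  interpret A: group A by (rule assms(1))
  show ?thesis using assms(2) unfolding proper_left_invariant_metric_def by simp
qed

lemma plim_bound:
  assumes "group A" "proper_left_invariant_metric A d"
  shows "\<exists>s. \<forall>a\<in>carrier A. \<forall>b\<in>carrier A. d a b \<le> r \<longrightarrow> \<rho> (inv\<^bsub>A\<^esub> a \<otimes>\<^bsub>A\<^esub> b) \<le> (s::real)"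
proof -
  interpret A: group A by (rule assms(1))
  let ?S = "{c \<in> carrier A. d \<one>\<^bsub>A\<^esub> c \<le> r}"
  have fin: "finite ?S" by (rule plim_finite_ball[OF assms])
  let ?s = "Max (insert 0 (\<rho> ` ?S))"
  have "\<forall>a\<in>carrier A. \<forall>b\<in>carrier A. d a b \<le> r \<longrightarrow> \<rho> (inv\<^bsub>A\<^esub> a \<otimes>\<^bsub>A\<^esub> b) \<le> ?s"
  proof (intro ballI impI)
    fix a b assume ab: "a \<in> carrier A" "b \<in> carrier A" "d a b \<le> r"
    then have "inv\<^bsub>A\<^esub> a \<otimes>\<^bsub>A\<^esub> b \<in> ?S" using plim_inv_left[OF assms ab(1,2)] by simp
    then show "\<rho> (inv\<^bsub>A\<^esub> a \<otimes>\<^bsub>A\<^esub> b) \<le> ?s" using fin by (intro Max_ge) auto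
  qed
  then show ?thesis by blast
qed

context wr
begin

definition NE :: "'g set \<Rightarrow> (('g \<Rightarrow> 'h) \<times> 'g) set" where
  "NE E = {w \<in> carrier W. snd w = \<one>\<^bsub>G\<^esub> \<and> supp (fst w) \<subseteq> E}"

definition Nn :: "(('g \<Rightarrow> 'h) \<times> 'g) set" where
  "Nn = {w \<in> carrier W. snd w = \<one>\<^bsub>G\<^esub>}"

lemma W_pair: "w \<in> carrier W \<Longrightarrow> fst w \<in> extensional (carrier G) \<and> fst w \<in> carrier G \<rightarrow> carrier H \<and> finite (supp (fst w)) \<and> snd w \<in> carrier G"
  using carrier_W[of "fst w" "snd w"] by simp

lemma fst_mult_N:
  assumes "snd u = \<one>\<^bsub>G\<^esub>" "y \<in> carrier G"
  shows "fst (u \<otimes>\<^bsub>W\<^esub> v) y = fst u y \<otimes>\<^bsub>H\<^esub> fst v y"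
proof -
  obtain f g f' g' where "u = (f, g)" "v = (f', g')" by (metis prod.exhaust)
  then show ?thesis using assms by (simp add: mult_W)
qed

lemma snd_mult: "snd (u \<otimes>\<^bsub>W\<^esub> v) = snd u \<otimes>\<^bsub>G\<^esub> snd v"
proof -
  obtain f g f' g' where "u = (f, g)" "v = (f', g')" by (metis prod.exhaust)
  then show ?thesis by (simp add: mult_W)
qed

lemma fst_inv_N:
  assumes "w \<in> carrier W" "snd w = \<one>\<^bsub>G\<^esub>" "y \<in> carrier G"
  shows "fst (inv\<^bsub>W\<^esub> w) y = inv\<^bsub>H\<^esub> (fst w y)"
  using assms by (simp add: inv_W invW_def)

lemma snd_inv: "w \<in> carrier W \<Longrightarrow> snd (inv\<^bsub>W\<^esub> w) = inv\<^bsub>G\<^esub> (snd w)"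
  by (simp add: inv_W invW_def)

lemma NE_sub: "NE E \<subseteq> carrier W" unfolding NE_def by blast

lemma NE_mult:
  assumes "a \<in> NE E" "b \<in> NE E" shows "a \<otimes>\<^bsub>W\<^esub> b \<in> NE E"
proof -
  interpret Wg: group W by (rule group_W)
  have ab: "a \<in> carrier W" "b \<in> carrier W" "snd a = \<one>\<^bsub>G\<^esub>" "snd b = \<one>\<^bsub>G\<^esub>"
    "supp (fst a) \<subseteq> E" "supp (fst b) \<subseteq> E" using assms by (auto simp: NE_def)
  have "supp (fst (a \<otimes>\<^bsub>W\<^esub> b)) \<subseteq> supp (fst a) \<union> supp (fst b)"
  proof
    fix y assume y: "y \<in> supp (fst (a \<otimes>\<^bsub>W\<^esub> b))"
    then have yG: "y \<in> carrier G" by (simp add: supp_def)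
    have "fst a y \<otimes>\<^bsub>H\<^esub> fst b y \<noteq> \<one>\<^bsub>H\<^esub>" using y yG fst_mult_N[OF ab(3) yG] by (simp add: supp_def)
    moreover have "fst b y \<in> carrier H" using W_pair[OF ab(2)] yG by (metis funcset_mem)
    moreover have "fst a y \<in> carrier H" using W_pair[OF ab(1)] yG by (metis funcset_mem)
    ultimately have "fst a y \<noteq> \<one>\<^bsub>H\<^esub> \<or> fst b y \<noteq> \<one>\<^bsub>H\<^esub>" by (cases "fst a y = \<one>\<^bsub>H\<^esub>") simp_all
    then show "y \<in> supp (fst a) \<union> supp (fst b)" using yG by (auto simp: supp_def)
  qed
  moreover have "snd (a \<otimes>\<^bsub>W\<^esub> b) = \<one>\<^bsub>G\<^esub>" using ab by (simp add: snd_mult)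
  ultimately show ?thesis using ab unfolding NE_def by auto
qed

lemma NE_inv:
  assumes "a \<in> NE E" shows "inv\<^bsub>W\<^esub> a \<in> NE E"
proof -
  interpret Wg: group W by (rule group_W)
  have ab: "a \<in> carrier W" "snd a = \<one>\<^bsub>G\<^esub>" "supp (fst a) \<subseteq> E" using assms by (auto simp: NE_def)
  have "supp (fst (inv\<^bsub>W\<^esub> a)) \<subseteq> supp (fst a)"
  proof
    fix y assume y: "y \<in> supp (fst (inv\<^bsub>W\<^esub> a))"
    then have yG: "y \<in> carrier G" by (simp add: supp_def)
    have "inv\<^bsub>H\<^esub> (fst a y) \<noteq> \<one>\<^bsub>H\<^esub>" using y yG fst_inv_N[OF ab(1,2) yG] by (simp add: supp_def)
    then have "fst a y \<noteq> \<one>\<^bsub>H\<^esub>" by auto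
    then show "y \<in> supp (fst a)" using yG by (auto simp: supp_def)
  qed
  moreover have "snd (inv\<^bsub>W\<^esub> a) = \<one>\<^bsub>G\<^esub>" using ab by (simp add: snd_inv)
  ultimately show ?thesis using ab unfolding NE_def by auto
qed

lemma NE_one: "\<one>\<^bsub>W\<^esub> \<in> NE E"
proof -
  have "snd \<one>\<^bsub>W\<^esub> = \<one>\<^bsub>G\<^esub>" "supp (fst \<one>\<^bsub>W\<^esub>) = {}" by (simp_all add: one_W supp_def)
  then show ?thesis using one_closed_W by (simp add: NE_def)
qed

lemma NE_coset:
  assumes "u \<in> carrier W" "a \<in> NE E"
  shows "(\<lambda>z. (u \<otimes>\<^bsub>W\<^esub> a) \<otimes>\<^bsub>W\<^esub> z) ` NE E = (\<lambda>z. u \<otimes>\<^bsub>W\<^esub> z) ` NE E"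
proof -
  interpret Wg: group W by (rule group_W)
  have aW: "a \<in> carrier W" using assms NE_sub by blast
  show ?thesis
  proof
    show "(\<lambda>z. (u \<otimes>\<^bsub>W\<^esub> a) \<otimes>\<^bsub>W\<^esub> z) ` NE E \<subseteq> (\<lambda>z. u \<otimes>\<^bsub>W\<^esub> z) ` NE E"
    proof
      fix x assume "x \<in> (\<lambda>z. (u \<otimes>\<^bsub>W\<^esub> a) \<otimes>\<^bsub>W\<^esub> z) ` NE E"
      then obtain z where z: "z \<in> NE E" "x = (u \<otimes>\<^bsub>W\<^esub> a) \<otimes>\<^bsub>W\<^esub> z" by blast
      have zW: "z \<in> carrier W" using z NE_sub by blast
      have "x = u \<otimes>\<^bsub>W\<^esub> (a \<otimes>\<^bsub>W\<^esub> z)" using assms aW zW z(2) by (simp add: Wg.m_assoc)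
      moreover have "a \<otimes>\<^bsub>W\<^esub> z \<in> NE E" using NE_mult assms z by blast
      ultimately show "x \<in> (\<lambda>z. u \<otimes>\<^bsub>W\<^esub> z) ` NE E" by blast
    qed
    show "(\<lambda>z. u \<otimes>\<^bsub>W\<^esub> z) ` NE E \<subseteq> (\<lambda>z. (u \<otimes>\<^bsub>W\<^esub> a) \<otimes>\<^bsub>W\<^esub> z) ` NE E"
    proof
      fix x assume "x \<in> (\<lambda>z. u \<otimes>\<^bsub>W\<^esub> z) ` NE E"
      then obtain z where z: "z \<in> NE E" "x = u \<otimes>\<^bsub>W\<^esub> z" by blast
      have zW: "z \<in> carrier W" using z NE_sub by blast
      have "x = (u \<otimes>\<^bsub>W\<^esub> a) \<otimes>\<^bsub>W\<^esub> (inv\<^bsub>W\<^esub> a \<otimes>\<^bsub>W\<^esub> z)"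
        using assms aW zW z by (simp add: Wg.m_assoc[symmetric] Wg.m_assoc)
      moreover have "inv\<^bsub>W\<^esub> a \<otimes>\<^bsub>W\<^esub> z \<in> NE E" using NE_mult NE_inv assms z by blast
      ultimately show "x \<in> (\<lambda>z. (u \<otimes>\<^bsub>W\<^esub> a) \<otimes>\<^bsub>W\<^esub> z) ` NE E" by blast
    qed
  qed
qed

end


locale wrm = wr G H for G :: "('g, 'c) monoid_scheme" and H :: "('h, 'd) monoid_scheme" +
  fixes dG :: "'g \<Rightarrow> 'g \<Rightarrow> real" and dH :: "'h \<Rightarrow> 'h \<Rightarrow> real"
    and dW :: "('g \<Rightarrow> 'h) \<times> 'g \<Rightarrow> ('g \<Rightarrow> 'h) \<times> 'g \<Rightarrow> real"
  assumes mG: "proper_left_invariant_metric G dG"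
    and mH: "proper_left_invariant_metric H dH"
    and mW: "proper_left_invariant_metric W dW"
begin

abbreviation TF where
  "TF XX \<equiv> {B. \<exists>A\<in>XX. A \<subseteq> carrier W \<and> (\<exists>g\<in>carrier W. B \<subseteq> (\<lambda>x. g \<otimes>\<^bsub>W\<^esub> x) ` A)}"

lemma invW_metric: "\<forall>g\<in>carrier W. \<forall>x\<in>carrier W. \<forall>y\<in>carrier W. dW (g \<otimes>\<^bsub>W\<^esub> x) (g \<otimes>\<^bsub>W\<^esub> y) = dW x y"
  using mW unfolding proper_left_invariant_metric_def by blast

lemma TF_I: "A \<in> XX \<Longrightarrow> A \<subseteq> carrier W \<Longrightarrow> g \<in> carrier W \<Longrightarrow> B \<subseteq> (\<lambda>x. g \<otimes>\<^bsub>W\<^esub> x) ` A \<Longrightarrow> B \<in> TF XX"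
  by blast

lemma TF_class: "APC_class dW XX \<Longrightarrow> APC_class dW (TF XX)"
  by (rule APC_transl[OF invW_metric])

lemma transl_union:
  assumes "APC_class dW {A}" "A \<subseteq> carrier W" "finite F" "\<forall>h\<in>F. t h \<in> carrier W"
  shows "APC_class dW (TF {\<Union>h\<in>F. (\<lambda>z. t h \<otimes>\<^bsub>W\<^esub> z) ` A})"
    and "(\<Union>h\<in>F. (\<lambda>z. t h \<otimes>\<^bsub>W\<^esub> z) ` A) \<subseteq> carrier W"
proof -
  interpret Wg: group W by (rule group_W)
  have T: "APC_class dW (TF {A})" by (rule TF_class[OF assms(1)])
  have "\<forall>h\<in>F. APC_class dW {(\<lambda>z. t h \<otimes>\<^bsub>W\<^esub> z) ` A}"
  proof
    fix h assume h: "h \<in> F"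
    have "{(\<lambda>z. t h \<otimes>\<^bsub>W\<^esub> z) ` A} \<subseteq> TF {A}" using assms(2,4) h by blast
    then show "APC_class dW {(\<lambda>z. t h \<otimes>\<^bsub>W\<^esub> z) ` A}" by (rule APC_mono[OF T])
  qed
  then have "APC_class dW {\<Union>h\<in>F. (\<lambda>z. t h \<otimes>\<^bsub>W\<^esub> z) ` A}" by (rule APC_Union_fin[OF assms(3)])
  then show "APC_class dW (TF {\<Union>h\<in>F. (\<lambda>z. t h \<otimes>\<^bsub>W\<^esub> z) ` A})" by (rule TF_class)
  show "(\<Union>h\<in>F. (\<lambda>z. t h \<otimes>\<^bsub>W\<^esub> z) ` A) \<subseteq> carrier W" using assms(2,4) by auto
qed

lemma fst_mult_N_fun:
  assumes "snd u = \<one>\<^bsub>G\<^esub>"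
  shows "fst (u \<otimes>\<^bsub>W\<^esub> v) = (\<lambda>y. if y \<in> carrier G then fst u y \<otimes>\<^bsub>H\<^esub> fst v y else undefined)"
proof
  fix y
  obtain f g f' g' where uv: "u = (f, g)" "v = (f', g')" by (metis prod.exhaust)
  show "fst (u \<otimes>\<^bsub>W\<^esub> v) y = (if y \<in> carrier G then fst u y \<otimes>\<^bsub>H\<^esub> fst v y else undefined)"
  proof (cases "y \<in> carrier G")
    case True then show ?thesis using fst_mult_N[OF assms True] by simp
  next
    case False then show ?thesis using uv by (simp add: mult_W)
  qed
qed

definition dl :: "'g \<Rightarrow> 'h \<Rightarrow> ('g \<Rightarrow> 'h) \<times> 'g" where
  "dl x h = ((\<lambda>y. if y \<in> carrier G then (if y = x then h else \<one>\<^bsub>H\<^esub>) else undefined), \<one>\<^bsub>G\<^esub>)"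

lemma dl_closed:
  assumes "x \<in> carrier G" "h \<in> carrier H" shows "dl x h \<in> carrier W"
proof -
  have "supp (fst (dl x h)) \<subseteq> {x}" by (auto simp: dl_def supp_def)
  then have "finite (supp (fst (dl x h)))" by (rule finite_subset) simp
  then show ?thesis using assms unfolding dl_def by (auto simp: carrier_W extensional_def)
qed

lemma dl_mult:
  assumes "x \<in> carrier G" "p \<in> carrier H" "q \<in> carrier H"
  shows "dl x p \<otimes>\<^bsub>W\<^esub> dl x q = dl x (p \<otimes>\<^bsub>H\<^esub> q)"
proof -
  have s: "snd (dl x p) = \<one>\<^bsub>G\<^esub>" by (simp add: dl_def)
  have "fst (dl x p \<otimes>\<^bsub>W\<^esub> dl x q) = fst (dl x (p \<otimes>\<^bsub>H\<^esub> q))"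
    unfolding fst_mult_N_fun[OF s] by (rule ext) (simp add: dl_def assms)
  moreover have "snd (dl x p \<otimes>\<^bsub>W\<^esub> dl x q) = snd (dl x (p \<otimes>\<^bsub>H\<^esub> q))"
    by (simp add: snd_mult dl_def)
  ultimately show ?thesis by (simp add: prod_eq_iff)
qed

lemma NE_empty_bounded: "bounded_family dW {NE {}}"
proof -
  have "\<forall>w\<in>NE {}. w = \<one>\<^bsub>W\<^esub>"
  proof
    fix w assume w: "w \<in> NE {}"
    then have wW: "w \<in> carrier W" "snd w = \<one>\<^bsub>G\<^esub>" "supp (fst w) = {}" by (auto simp: NE_def)
    have "fst w = fst \<one>\<^bsub>W\<^esub>"
    proof
      fix y show "fst w y = fst \<one>\<^bsub>W\<^esub> y"
      proof (cases "y \<in> carrier G")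
        case True then show ?thesis using wW(3) by (auto simp: supp_def one_W)
      next
        case False then show ?thesis using W_pair[OF wW(1)] by (simp add: one_W extensional_def)
      qed
    qed
    moreover have "snd w = snd \<one>\<^bsub>W\<^esub>" using wW(2) by (simp add: one_W)
    ultimately show "w = \<one>\<^bsub>W\<^esub>" by (simp add: prod_eq_iff)
  qed
  then have "\<forall>A\<in>{NE {}}. \<forall>x\<in>A. \<forall>y\<in>A. dW x y \<le> dW \<one>\<^bsub>W\<^esub> \<one>\<^bsub>W\<^esub>"
    by (metis order_refl singletonD)
  then show ?thesis unfolding bounded_family_def by (rule exI)
qed

lemma NE_class:
  assumes cH: "APC_class dH {carrier H}"
  shows "finite E \<Longrightarrow> E \<subseteq> carrier G \<Longrightarrow> APC_class dW {NE E}"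
proof (induction E rule: finite_induct)
  case empty
  show ?case by (rule APC_class.bounded[OF NE_empty_bounded])
next
  case (insert x E)
  interpret Wg: group W by (rule group_W)
  have xG: "x \<in> carrier G" and EG: "E \<subseteq> carrier G" using insert.prems by auto
  have IH: "APC_class dW {NE E}" using insert.IH EG by simp
  let ?S = "NE (insert x E)"
  let ?p = "\<lambda>w. fst w x"
  have img: "(\<lambda>Y. ?p -` Y \<inter> ?S) ` {carrier H} = {?S}"
  proof -
    have "?p -` carrier H \<inter> ?S = ?S"
    proof
      show "?S \<subseteq> ?p -` carrier H \<inter> ?S"
      proof
        fix w assume "w \<in> ?S"
        then have "w \<in> carrier W" by (simp add: NE_def)
        then have "fst w x \<in> carrier H" using W_pair xG by (metis funcset_mem)
        then show "w \<in> ?p -` carrier H \<inter> ?S" using \<open>w \<in> ?S\<close> by simp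
      qed
    qed blast
    then show ?thesis by simp
  qed
  have H1: "\<exists>s. \<forall>w\<in>?S. \<forall>w'\<in>?S. dW w w' \<le> r \<longrightarrow> dH (?p w) (?p w') \<le> s" for r
  proof -
    obtain s where s: "\<forall>a\<in>carrier W. \<forall>b\<in>carrier W. dW a b \<le> r \<longrightarrow>
        dH \<one>\<^bsub>H\<^esub> (fst (inv\<^bsub>W\<^esub> a \<otimes>\<^bsub>W\<^esub> b) x) \<le> s"
      using plim_bound[OF group_W mW, of r "\<lambda>v. dH \<one>\<^bsub>H\<^esub> (fst v x)"] by blast
    have "\<forall>w\<in>?S. \<forall>w'\<in>?S. dW w w' \<le> r \<longrightarrow> dH (?p w) (?p w') \<le> s"
    proof (intro ballI impI)
      fix w w' assume ww: "w \<in> ?S" "w' \<in> ?S" "dW w w' \<le> r"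
      then have wW: "w \<in> carrier W" "w' \<in> carrier W" "snd w = \<one>\<^bsub>G\<^esub>" by (auto simp: NE_def)
      have "fst w x \<in> carrier H" "fst w' x \<in> carrier H" using W_pair wW xG by (metis funcset_mem)+
      then have "dH (?p w) (?p w') = dH \<one>\<^bsub>H\<^esub> (inv\<^bsub>H\<^esub> (fst w x) \<otimes>\<^bsub>H\<^esub> fst w' x)"
        by (intro plim_inv_left[OF H.is_group mH])
      also have "inv\<^bsub>H\<^esub> (fst w x) \<otimes>\<^bsub>H\<^esub> fst w' x = fst (inv\<^bsub>W\<^esub> w \<otimes>\<^bsub>W\<^esub> w') x"
        using fst_mult_N[of "inv\<^bsub>W\<^esub> w" x w'] snd_inv[OF wW(1)] wW xG fst_inv_N[OF wW(1) wW(3) xG] by simp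
      finally show "dH (?p w) (?p w') \<le> s" using s wW ww(3) by simp
    qed
    then show ?thesis by blast
  qed
  have H2: "APC_class dW ((\<lambda>Y. ?p -` Y \<inter> ?S) ` ZZ)" if bZ: "bounded_family dH ZZ" for ZZ
  proof -
    obtain B where B: "\<forall>A\<in>ZZ. \<forall>a\<in>A. \<forall>b\<in>A. dH a b \<le> B" using bZ unfolding bounded_family_def by blast
    define F where "F = {h \<in> carrier H. dH \<one>\<^bsub>H\<^esub> h \<le> B}"
    have finF: "finite F" unfolding F_def by (rule plim_finite_ball[OF H.is_group mH])
    define U where "U = (\<Union>h\<in>F. (\<lambda>z. dl x h \<otimes>\<^bsub>W\<^esub> z) ` NE E)"
    have tF: "\<forall>h\<in>F. dl x h \<in> carrier W" using dl_closed xG by (simp add: F_def)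
    have CU: "APC_class dW (TF {U})" and UW: "U \<subseteq> carrier W"
      unfolding U_def by (rule transl_union[OF IH NE_sub finF tF])+
    have "(\<lambda>Y. ?p -` Y \<inter> ?S) ` ZZ \<subseteq> TF {U}"
    proof
      fix P assume "P \<in> (\<lambda>Y. ?p -` Y \<inter> ?S) ` ZZ"
      then obtain Y where Y: "Y \<in> ZZ" "P = ?p -` Y \<inter> ?S" by (elim imageE) (rule that, assumption, assumption)
      show "P \<in> TF {U}"
      proof (cases "P = {}")
        case True
        then show ?thesis by (intro TF_I[OF _ UW Wg.one_closed]) simp_all
      next
        case False
        then obtain w0 where w0: "w0 \<in> P" by blast
        let ?y0 = "fst w0 x"
        have w0W: "w0 \<in> carrier W" using w0 Y(2) by (simp add: NE_def)
        have y0: "?y0 \<in> Y" using w0 Y(2) by simp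
        have y0H: "?y0 \<in> carrier H" using W_pair[OF w0W] xG by (metis funcset_mem)
        note y0 = y0 y0H
        have "P \<subseteq> (\<lambda>z. dl x ?y0 \<otimes>\<^bsub>W\<^esub> z) ` U"
        proof
          fix w assume w: "w \<in> P"
          then have wS: "w \<in> ?S" and aY: "fst w x \<in> Y" using Y(2) by auto
          then have wW: "w \<in> carrier W" "snd w = \<one>\<^bsub>G\<^esub>" "supp (fst w) \<subseteq> insert x E" by (auto simp: NE_def)
          define a where "a = fst w x"
          have aH: "a \<in> carrier H" unfolding a_def using W_pair[OF wW(1)] xG by (metis funcset_mem)
          define hh where "hh = inv\<^bsub>H\<^esub> ?y0 \<otimes>\<^bsub>H\<^esub> a"
          have hhH: "hh \<in> carrier H" unfolding hh_def using aH y0 by simp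
          have "dH \<one>\<^bsub>H\<^esub> hh = dH ?y0 a" unfolding hh_def by (rule plim_inv_left[OF H.is_group mH y0(2) aH, symmetric])
          also have "\<dots> \<le> B" using B Y(1) y0(1) aY unfolding a_def by blast
          finally have hhF: "hh \<in> F" using hhH by (simp add: F_def)
          define w' where "w' = inv\<^bsub>W\<^esub> (dl x a) \<otimes>\<^bsub>W\<^esub> w"
          have daW: "dl x a \<in> carrier W" by (rule dl_closed[OF xG aH])
          have sinv: "snd (inv\<^bsub>W\<^esub> (dl x a)) = \<one>\<^bsub>G\<^esub>" using snd_inv[OF daW] by (simp add: dl_def)
          have w'W: "w' \<in> carrier W" unfolding w'_def using daW wW by simp
          have "snd w' = \<one>\<^bsub>G\<^esub>" unfolding w'_def using sinv wW by (simp add: snd_mult)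
          moreover have "supp (fst w') \<subseteq> E"
          proof
            fix y assume y: "y \<in> supp (fst w')"
            then have yG: "y \<in> carrier G" by (simp add: supp_def)
            have ne: "fst w' y \<noteq> \<one>\<^bsub>H\<^esub>" using y by (simp add: supp_def)
            have fw': "fst w' y = inv\<^bsub>H\<^esub> (fst (dl x a) y) \<otimes>\<^bsub>H\<^esub> fst w y"
              unfolding w'_def using fst_mult_N[OF sinv yG] fst_inv_N[OF daW _ yG] by (simp add: dl_def)
            show "y \<in> E"
            proof (cases "y = x")
              case True
              then have "fst w' y = inv\<^bsub>H\<^esub> a \<otimes>\<^bsub>H\<^esub> a" using fw' xG by (simp add: dl_def a_def)
              then show ?thesis using ne aH by simp
            next
              case False
              have fwH: "fst w y \<in> carrier H" using W_pair[OF wW(1)] yG by (metis funcset_mem)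
              have "fst w' y = fst w y" using fw' False yG fwH by (simp add: dl_def)
              then have "y \<in> supp (fst w)" using ne yG by (simp add: supp_def)
              then show ?thesis using wW(3) False by blast
            qed
          qed
          ultimately have w'N: "w' \<in> NE E" using w'W by (simp add: NE_def)
          have "dl x ?y0 \<otimes>\<^bsub>W\<^esub> (dl x hh \<otimes>\<^bsub>W\<^esub> w') = (dl x ?y0 \<otimes>\<^bsub>W\<^esub> dl x hh) \<otimes>\<^bsub>W\<^esub> w'"
            using dl_closed xG y0(2) hhH w'W by (simp add: Wg.m_assoc)
          also have "dl x ?y0 \<otimes>\<^bsub>W\<^esub> dl x hh = dl x a"
            using dl_mult[OF xG y0(2) hhH] y0(2) aH unfolding hh_def by (simp add: H.m_assoc[symmetric])
          also have "dl x a \<otimes>\<^bsub>W\<^esub> w' = w" unfolding w'_def using daW wW by (simp add: Wg.m_assoc[symmetric])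
          finally have "w = dl x ?y0 \<otimes>\<^bsub>W\<^esub> (dl x hh \<otimes>\<^bsub>W\<^esub> w')" by simp
          moreover have "dl x hh \<otimes>\<^bsub>W\<^esub> w' \<in> U" unfolding U_def using hhF w'N by blast
          ultimately show "w \<in> (\<lambda>z. dl x ?y0 \<otimes>\<^bsub>W\<^esub> z) ` U" by blast
        qed
        moreover have "dl x ?y0 \<in> carrier W" by (rule dl_closed[OF xG y0(2)])
        ultimately show ?thesis by (intro TF_I[OF _ UW]) simp_all
      qed
    qed
    then show ?thesis by (rule APC_mono[OF CU])
  qed
  have "APC_class dW ((\<lambda>Y. ?p -` Y \<inter> ?S) ` {carrier H})"
    by (rule APC_fiber[OF cH H1 H2])
  then show ?case unfolding img .
qed

lemma Nn_class:
  assumes cH: "APC_class dH {carrier H}"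
  shows "APC_class dW {Nn}"
proof (rule APC_class.step)
  interpret Wg: group W by (rule group_W)
  fix R :: "nat \<Rightarrow> real"
  define Bl where "Bl = {c \<in> carrier W. dW \<one>\<^bsub>W\<^esub> c \<le> R 1}"
  have finBl: "finite Bl" unfolding Bl_def by (rule plim_finite_ball[OF group_W mW])
  define E where "E = (\<Union>w\<in>Bl. supp (fst w))"
  have finE: "finite E" unfolding E_def using finBl W_pair by (auto simp: Bl_def)
  have EG: "E \<subseteq> carrier G" unfolding E_def supp_def by blast
  have CE: "APC_class dW (TF {NE E})" by (rule TF_class[OF NE_class[OF cH finE EG]])
  define UU where "UU = (\<lambda>i::nat. (\<lambda>u. (\<lambda>z. u \<otimes>\<^bsub>W\<^esub> z) ` NE E) ` Nn)"
  have NEN: "NE E \<subseteq> Nn" unfolding NE_def Nn_def by blast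
  have NnW: "Nn \<subseteq> carrier W" unfolding Nn_def by blast
  have sub: "UU 1 \<subseteq> TF {NE E}"
  proof
    fix V assume "V \<in> UU 1"
    then obtain u where u: "u \<in> Nn" "V = (\<lambda>z. u \<otimes>\<^bsub>W\<^esub> z) ` NE E" unfolding UU_def
      by (elim imageE) (rule that, assumption, assumption)
    show "V \<in> TF {NE E}" using u NnW by (intro TF_I[OF _ NE_sub, where g=u]) auto
  qed
  have inN: "\<forall>V\<in>UU 1. V \<subseteq> Nn"
  proof
    fix V assume "V \<in> UU 1"
    then obtain u where u: "u \<in> Nn" "V = (\<lambda>z. u \<otimes>\<^bsub>W\<^esub> z) ` NE E" unfolding UU_def
      by (elim imageE) (rule that, assumption, assumption)
    show "V \<subseteq> Nn"
    proof
      fix y assume "y \<in> V"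
      then obtain z where z: "z \<in> NE E" "y = u \<otimes>\<^bsub>W\<^esub> z" using u(2) by blast
      have "z \<in> Nn" using z(1) NEN by blast
      then show "y \<in> Nn" using u(1) z(2) by (simp add: Nn_def snd_mult)
    qed
  qed
  have disj: "r_disjoint dW (R 1) (UU 1)"
    unfolding r_disjoint_def
  proof (intro ballI impI)
    fix V V' x y assume VV: "V \<in> UU 1" "V' \<in> UU 1" "V \<noteq> V'" "x \<in> V" "y \<in> V'"
    obtain u where u: "u \<in> Nn" "V = (\<lambda>z. u \<otimes>\<^bsub>W\<^esub> z) ` NE E" using VV(1) unfolding UU_def
      by (elim imageE) (rule that, assumption, assumption)
    obtain u' where u': "u' \<in> Nn" "V' = (\<lambda>z. u' \<otimes>\<^bsub>W\<^esub> z) ` NE E" using VV(2) unfolding UU_def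
      by (elim imageE) (rule that, assumption, assumption)
    obtain a where a: "a \<in> NE E" "x = u \<otimes>\<^bsub>W\<^esub> a" using VV(4) u(2) by blast
    obtain b where b: "b \<in> NE E" "y = u' \<otimes>\<^bsub>W\<^esub> b" using VV(5) u'(2) by blast
    have uW: "u \<in> carrier W" "u' \<in> carrier W" using u(1) u'(1) NnW by blast+
    have abN: "a \<in> Nn" "b \<in> Nn" using a(1) b(1) NEN by blast+
    have xN: "x \<in> Nn" "y \<in> Nn" using inN VV by blast+
    then have xW: "x \<in> carrier W" "y \<in> carrier W" using NnW by blast+
    show "dW x y > R 1"
    proof (rule ccontr)
      assume "\<not> dW x y > R 1"
      then have le: "dW x y \<le> R 1" by simp
      define c where "c = inv\<^bsub>W\<^esub> x \<otimes>\<^bsub>W\<^esub> y"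
      have cW: "c \<in> carrier W" unfolding c_def using xW by simp
      have "dW \<one>\<^bsub>W\<^esub> c \<le> R 1" unfolding c_def using plim_inv_left[OF group_W mW xW] le by simp
      then have "c \<in> Bl" using cW by (simp add: Bl_def)
      then have "supp (fst c) \<subseteq> E" unfolding E_def by blast
      moreover have "snd c = \<one>\<^bsub>G\<^esub>" unfolding c_def using xN xW by (simp add: snd_mult snd_inv Nn_def)
      ultimately have cN: "c \<in> NE E" using cW by (simp add: NE_def)
      have yxc: "y = x \<otimes>\<^bsub>W\<^esub> c" unfolding c_def using xW by (simp add: Wg.m_assoc[symmetric])
      have "V = (\<lambda>z. x \<otimes>\<^bsub>W\<^esub> z) ` NE E" using u(2) a(2) NE_coset[OF uW(1) a(1)] by simp
      also have "\<dots> = (\<lambda>z. y \<otimes>\<^bsub>W\<^esub> z) ` NE E" using yxc NE_coset[OF xW(1) cN] by simp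
      also have "\<dots> = V'" using u'(2) b(2) NE_coset[OF uW(2) b(1)] by simp
      finally show False using VV(3) by simp
    qed
  qed
  have cov: "\<Union>(\<Union>i\<in>{1..1}. UU i) = Nn"
  proof
    show "\<Union>(\<Union>i\<in>{1..1}. UU i) \<subseteq> Nn" using inN by (simp add: UU_def) blast
    show "Nn \<subseteq> \<Union>(\<Union>i\<in>{1..1}. UU i)"
    proof
      fix u assume u: "u \<in> Nn"
      then have "u = u \<otimes>\<^bsub>W\<^esub> \<one>\<^bsub>W\<^esub>" using NnW by auto
      then have "u \<in> (\<lambda>z. u \<otimes>\<^bsub>W\<^esub> z) ` NE E" using NE_one by blast
      moreover have "(\<lambda>z. u \<otimes>\<^bsub>W\<^esub> z) ` NE E \<in> UU 1" unfolding UU_def using u by blast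
      ultimately show "u \<in> \<Union>(\<Union>i\<in>{1..1}. UU i)" by auto
    qed
  qed
  have "decomp_k dW {Nn} R (TF {NE E}) 1"
    unfolding decomp_k_def
  proof
    fix A assume "A \<in> {Nn}"
    then have A: "A = Nn" by simp
    have "\<forall>i\<in>{1..1}. UU i \<subseteq> TF {NE E} \<and> (\<forall>V\<in>UU i. V \<subseteq> A) \<and> r_disjoint dW (R i) (UU i)"
      using sub inN disj A by simp
    moreover have "\<Union>(\<Union>i\<in>{1..1}. UU i) = A" using cov A by simp
    ultimately show "\<exists>UU. (\<forall>i\<in>{1..1}. UU i \<subseteq> TF {NE E} \<and> (\<forall>V\<in>UU i. V \<subseteq> A) \<and> r_disjoint dW (R i) (UU i)) \<and>
        \<Union>(\<Union>i\<in>{1..1}. UU i) = A" by (intro exI[where x=UU] conjI)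
  qed
  then have "decomposes dW {Nn} R (TF {NE E})" unfolding decomposes_k by (rule exI)
  with CE show "\<exists>YY. APC_class dW YY \<and> decomposes dW {Nn} R YY" by (intro exI[where x="TF {NE E}"] conjI)
qed

definition cW :: "'g \<Rightarrow> ('g \<Rightarrow> 'h) \<times> 'g" where
  "cW h = ((\<lambda>x. if x \<in> carrier G then \<one>\<^bsub>H\<^esub> else undefined), h)"

lemma cW_closed: "h \<in> carrier G \<Longrightarrow> cW h \<in> carrier W"
  by (simp add: cW_def carrier_W supp_def extensional_def)

lemma cW_mult:
  assumes "a \<in> carrier G" "b \<in> carrier G"
  shows "cW a \<otimes>\<^bsub>W\<^esub> cW b = cW (a \<otimes>\<^bsub>G\<^esub> b)"
proof -
  have "(\<lambda>x. if x \<in> carrier G then (if x \<in> carrier G then \<one>\<^bsub>H\<^esub> else undefined) \<otimes>\<^bsub>H\<^esub> (if inv\<^bsub>G\<^esub> a \<otimes>\<^bsub>G\<^esub> x \<in> carrier G then \<one>\<^bsub>H\<^esub> else undefined) else undefined)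
      = (\<lambda>x. if x \<in> carrier G then \<one>\<^bsub>H\<^esub> else undefined)"
    using assms by (intro ext) simp
  then show ?thesis unfolding cW_def mult_W by simp
qed

lemma W_class:
  assumes cH: "APC_class dH {carrier H}" and cG: "APC_class dG {carrier G}"
  shows "APC_class dW {carrier W}"
proof -
  interpret Wg: group W by (rule group_W)
  let ?S = "carrier W"
  let ?p = "snd :: ('g \<Rightarrow> 'h) \<times> 'g \<Rightarrow> 'g"
  have img: "(\<lambda>Y. ?p -` Y \<inter> ?S) ` {carrier G} = {?S}"
  proof -
    have "?p -` carrier G \<inter> ?S = ?S" using W_pair by blast
    then show ?thesis by simp
  qed
  have H1: "\<exists>s. \<forall>w\<in>?S. \<forall>w'\<in>?S. dW w w' \<le> r \<longrightarrow> dG (?p w) (?p w') \<le> s" for r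
  proof -
    obtain s where s: "\<forall>a\<in>carrier W. \<forall>b\<in>carrier W. dW a b \<le> r \<longrightarrow>
        dG \<one>\<^bsub>G\<^esub> (snd (inv\<^bsub>W\<^esub> a \<otimes>\<^bsub>W\<^esub> b)) \<le> s"
      using plim_bound[OF group_W mW, of r "\<lambda>v. dG \<one>\<^bsub>G\<^esub> (snd v)"] by blast
    have "\<forall>w\<in>?S. \<forall>w'\<in>?S. dW w w' \<le> r \<longrightarrow> dG (?p w) (?p w') \<le> s"
    proof (intro ballI impI)
      fix w w' assume ww: "w \<in> ?S" "w' \<in> ?S" "dW w w' \<le> r"
      have "snd w \<in> carrier G" "snd w' \<in> carrier G" using W_pair ww by blast+
      then have "dG (?p w) (?p w') = dG \<one>\<^bsub>G\<^esub> (inv\<^bsub>G\<^esub> (snd w) \<otimes>\<^bsub>G\<^esub> snd w')"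
        by (intro plim_inv_left[OF G.is_group mG])
      also have "inv\<^bsub>G\<^esub> (snd w) \<otimes>\<^bsub>G\<^esub> snd w' = snd (inv\<^bsub>W\<^esub> w \<otimes>\<^bsub>W\<^esub> w')"
        using ww by (simp add: snd_mult snd_inv)
      finally show "dG (?p w) (?p w') \<le> s" using s ww by simp
    qed
    then show ?thesis by blast
  qed
  have CN: "APC_class dW {Nn}" by (rule Nn_class[OF cH])
  have NnW: "Nn \<subseteq> carrier W" unfolding Nn_def by blast
  have H2: "APC_class dW ((\<lambda>Y. ?p -` Y \<inter> ?S) ` ZZ)" if bZ: "bounded_family dG ZZ" for ZZ
  proof -
    obtain B where B: "\<forall>A\<in>ZZ. \<forall>a\<in>A. \<forall>b\<in>A. dG a b \<le> B" using bZ unfolding bounded_family_def by blast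
    define F where "F = {h \<in> carrier G. dG \<one>\<^bsub>G\<^esub> h \<le> B}"
    have finF: "finite F" unfolding F_def by (rule plim_finite_ball[OF G.is_group mG])
    define U where "U = (\<Union>h\<in>F. (\<lambda>z. cW h \<otimes>\<^bsub>W\<^esub> z) ` Nn)"
    have tF: "\<forall>h\<in>F. cW h \<in> carrier W" using cW_closed by (simp add: F_def)
    have CU: "APC_class dW (TF {U})" and UW: "U \<subseteq> carrier W"
      unfolding U_def by (rule transl_union[OF CN NnW finF tF])+
    have "(\<lambda>Y. ?p -` Y \<inter> ?S) ` ZZ \<subseteq> TF {U}"
    proof
      fix P assume "P \<in> (\<lambda>Y. ?p -` Y \<inter> ?S) ` ZZ"
      then obtain Y where Y: "Y \<in> ZZ" "P = ?p -` Y \<inter> ?S" by (elim imageE) (rule that, assumption, assumption)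
      show "P \<in> TF {U}"
      proof (cases "P = {}")
        case True
        then show ?thesis by (intro TF_I[OF _ UW Wg.one_closed]) simp_all
      next
        case False
        then obtain w0 where w0: "w0 \<in> P" by blast
        let ?y0 = "snd w0"
        have y0: "?y0 \<in> Y" "?y0 \<in> carrier G" using w0 Y(2) W_pair by auto
        have "P \<subseteq> (\<lambda>z. cW ?y0 \<otimes>\<^bsub>W\<^esub> z) ` U"
        proof
          fix w assume w: "w \<in> P"
          then have wW: "w \<in> carrier W" and sY: "snd w \<in> Y" using Y(2) by auto
          define sw where "sw = snd w"
          have swG: "sw \<in> carrier G" unfolding sw_def using W_pair wW by blast
          define hh where "hh = inv\<^bsub>G\<^esub> ?y0 \<otimes>\<^bsub>G\<^esub> sw"
          have hhG: "hh \<in> carrier G" unfolding hh_def using swG y0 by simp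
          have "dG \<one>\<^bsub>G\<^esub> hh = dG ?y0 sw" unfolding hh_def by (rule plim_inv_left[OF G.is_group mG y0(2) swG, symmetric])
          also have "\<dots> \<le> B" using B Y(1) y0(1) sY unfolding sw_def by blast
          finally have hhF: "hh \<in> F" using hhG by (simp add: F_def)
          define n where "n = inv\<^bsub>W\<^esub> (cW sw) \<otimes>\<^bsub>W\<^esub> w"
          have csW: "cW sw \<in> carrier W" by (rule cW_closed[OF swG])
          have nN: "n \<in> Nn" unfolding n_def Nn_def using csW wW swG
            by (simp add: snd_mult snd_inv cW_def sw_def)
          have nW: "n \<in> carrier W" using nN NnW by blast
          have "cW ?y0 \<otimes>\<^bsub>W\<^esub> (cW hh \<otimes>\<^bsub>W\<^esub> n) = (cW ?y0 \<otimes>\<^bsub>W\<^esub> cW hh) \<otimes>\<^bsub>W\<^esub> n"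
            using cW_closed y0(2) hhG nW by (simp add: Wg.m_assoc)
          also have "cW ?y0 \<otimes>\<^bsub>W\<^esub> cW hh = cW sw"
            using cW_mult[OF y0(2) hhG] y0(2) swG unfolding hh_def by (simp add: G.m_assoc[symmetric])
          also have "cW sw \<otimes>\<^bsub>W\<^esub> n = w" unfolding n_def using csW wW by (simp add: Wg.m_assoc[symmetric])
          finally have "w = cW ?y0 \<otimes>\<^bsub>W\<^esub> (cW hh \<otimes>\<^bsub>W\<^esub> n)" by simp
          moreover have "cW hh \<otimes>\<^bsub>W\<^esub> n \<in> U" unfolding U_def using hhF nN by blast
          ultimately show "w \<in> (\<lambda>z. cW ?y0 \<otimes>\<^bsub>W\<^esub> z) ` U" by blast
        qed
        moreover have "cW ?y0 \<in> carrier W" by (rule cW_closed[OF y0(2)])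
        ultimately show ?thesis by (intro TF_I[OF _ UW]) simp_all
      qed
    qed
    then show ?thesis by (rule APC_mono[OF CU])
  qed
  have "APC_class dW ((\<lambda>Y. ?p -` Y \<inter> ?S) ` {carrier G})"
    by (rule APC_fiber[OF cG H1 H2])
  then show ?thesis unfolding img .
qed

end

theorem theorem4p11:
  fixes G :: "'g monoid" and H :: "'h monoid"
    and dG :: "'g \<Rightarrow> 'g \<Rightarrow> real" and dH :: "'h \<Rightarrow> 'h \<Rightarrow> real"
    and dW :: "('g \<Rightarrow> 'h) \<times> 'g \<Rightarrow> ('g \<Rightarrow> 'h) \<times> 'g \<Rightarrow> real"
  assumes "group G" and "group H"
    and "countable (carrier G)" and "countable (carrier H)"
    and "proper_left_invariant_metric G dG" and "proper_left_invariant_metric H dH"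
    and "finite_APC_complexity dG (carrier G)" and "finite_APC_complexity dH (carrier H)"
    and "proper_left_invariant_metric (wreath_product H G) dW"
  shows "finite_APC_complexity dW (carrier (wreath_product H G))"
proof -
  interpret wrm G H dG dH dW
    by (intro wrm.intro wr.intro wrm_axioms.intro assms)
  obtain XG where XG: "carrier G \<in> XG" "APC_class dG XG" using assms(7) unfolding finite_APC_complexity_def by blast
  obtain XH where XH: "carrier H \<in> XH" "APC_class dH XH" using assms(8) unfolding finite_APC_complexity_def by blast
  have cG: "APC_class dG {carrier G}" by (rule APC_mono[OF XG(2)]) (use XG(1) in simp)
  have cH: "APC_class dH {carrier H}" by (rule APC_mono[OF XH(2)]) (use XH(1) in simp)
  have "APC_class dW {carrier (wreath_product H G)}" by (rule W_class[OF cH cG])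
  then show ?thesis unfolding finite_APC_complexity_def by blast
qed


end
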